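(* Let $A,B\subset\mathbb{R}^n$ be set-germs at $0$ with $0\in\overline{A}\cap\overline{B}$, and let $h:(\mathbb{R}^n,0)\to(\mathbb{R}^n,0)$ be a bi-Lipschitz homeomorphism (germ). Suppose there are $d>1$ and $C>0$ such that $A\subset ST_d(B;C)$ as germs at $0$. Then $D(h(A))\subset D(h(B))$. Moreover, $D(ST_d(h(A);C'))\subset D(h(B))$ for any $C'>0$.
   Context: A bi-Lipschitz homeomorphism germ is a homeomorphism between neighbourhoods of $0$ fixing $0$ with $K_1|x-y|\le|h(x)-h(y)|\le K_2|x-y|$ for some $0<K_1\le K_2$ near $0$. Sea-tangle neighbourhood: $ST_d(X;C)=\{x\in\mathbb{R}^n : \mathrm{dist}(x,X)\le C|x|^d\}$. "As germs at $0$" means after intersecting with some neighbourhood of $0$. Direction set: $D(X)=\{a\in S^{n-1} : \exists\, \{x_i\}\subset X\setminus\{0\},\ x_i\to 0,\ x_i/\|x_i\|\to a\}$. *)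

theory Defs
  imports "HOL-Analysis.Analysis"
begin

definition sea_tangle :: "real \<Rightarrow> 'a::euclidean_space set \<Rightarrow> real \<Rightarrow> 'a set" where
  "sea_tangle d X C = {x. infdist x X \<le> C * norm x powr d}"

definition direction_set :: "'a::euclidean_space set \<Rightarrow> 'a set" where
  "direction_set X = {a. norm a = 1 \<and>
     (\<exists>x::nat \<Rightarrow> 'a. (\<forall>i. x i \<in> X - {0}) \<and> x \<longlonglongrightarrow> 0 \<and>
        (\<lambda>i. x i /\<^sub>R norm (x i)) \<longlonglongrightarrow> a)}"

definition bilipschitz_homeo_germ :: "('a::euclidean_space \<Rightarrow> 'a) \<Rightarrow> 'a set \<Rightarrow> bool" where
  "bilipschitz_homeo_germ h U \<longleftrightarrow>
     open U \<and> 0 \<in> U \<and> h 0 = 0 \<and> open (h ` U) \<and>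
     (\<exists>g. homeomorphism U (h ` U) h g) \<and>
     (\<exists>K1 K2. 0 < K1 \<and> K1 \<le> K2 \<and>
        (\<forall>x\<in>U. \<forall>y\<in>U. K1 * dist x y \<le> dist (h x) (h y) \<and> dist (h x) (h y) \<le> K2 * dist x y))"

end

theory Submission
  imports Defs
begin

lemma infdist_witness:
  fixes x :: "'a::metric_space"
  assumes "A \<noteq> {}" "infdist x A < t"
  shows "\<exists>a\<in>A. dist x a < t"
proof -
  have 1: "(INF a\<in>A. dist x a) < t" using assms by (simp add: infdist_notempty)
  have 2: "bdd_below ((\<lambda>a. dist x a) ` A)" by (rule bdd_belowI[of _ 0]) auto
  show ?thesis using 1 cINF_less_iff[OF assms(1) 2] by simp
qed

lemma unit_diff:
  fixes p q :: "'a::real_normed_vector"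
  assumes "p \<noteq> 0"
  shows "norm (q /\<^sub>R norm q - p /\<^sub>R norm p) \<le> 2 * (norm (q - p) / norm p)"
proof (cases "q = 0")
  case True
  then show ?thesis using assms by simp
next
  case False
  have np: "norm p > 0" using assms by simp
  have nq: "norm q > 0" using False by simp
  have e: "q /\<^sub>R norm q - p /\<^sub>R norm p = (q /\<^sub>R norm q - q /\<^sub>R norm p) + (q - p) /\<^sub>R norm p"
    by (simp add: algebra_simps)
  have "q /\<^sub>R norm q - q /\<^sub>R norm p = (1 / norm q - 1 / norm p) *\<^sub>R q"
    by (simp add: scaleR_diff_left divide_inverse)
  then have "norm (q /\<^sub>R norm q - q /\<^sub>R norm p) = \<bar>1 / norm q - 1 / norm p\<bar> * norm q"
    by simp
  also have "\<dots> = \<bar>norm p - norm q\<bar> / norm p"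
  proof -
    have "1 / norm q - 1 / norm p = (norm p - norm q) / (norm p * norm q)"
      using np nq by (simp add: field_simps)
    then have "\<bar>1 / norm q - 1 / norm p\<bar> = \<bar>norm p - norm q\<bar> / (norm p * norm q)"
      using np nq by simp
    then show ?thesis using np nq by simp
  qed
  also have "\<dots> \<le> norm (q - p) / norm p"
    using np norm_triangle_ineq3[of p q] by (intro divide_right_mono) (simp_all add: norm_minus_commute)
  finally have 1: "norm (q /\<^sub>R norm q - q /\<^sub>R norm p) \<le> norm (q - p) / norm p" .
  have 2: "norm ((q - p) /\<^sub>R norm p) = norm (q - p) / norm p" using np by (simp add: divide_inverse mult.commute)
  show ?thesis unfolding e using norm_triangle_ineq[of "q /\<^sub>R norm q - q /\<^sub>R norm p" "(q - p) /\<^sub>R norm p"] 1 2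
    by linarith
qed

lemma dir_close:
  fixes p q :: "nat \<Rightarrow> 'a::real_normed_vector"
  assumes p0: "\<And>i. p i \<noteq> 0" and pl: "p \<longlonglongrightarrow> 0" and pa: "(\<lambda>i. p i /\<^sub>R norm (p i)) \<longlonglongrightarrow> a"
    and r: "(\<lambda>i. norm (q i - p i) / norm (p i)) \<longlonglongrightarrow> 0"
  shows "eventually (\<lambda>i. q i \<noteq> 0) sequentially" "q \<longlonglongrightarrow> 0"
    "(\<lambda>i. q i /\<^sub>R norm (q i)) \<longlonglongrightarrow> a"
proof -
  have "eventually (\<lambda>i. norm (q i - p i) / norm (p i) < 1) sequentially"
    using order_tendstoD(2)[OF r] by simp
  then show "eventually (\<lambda>i. q i \<noteq> 0) sequentially"
    by eventually_elim (use p0 in auto)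
  have "(\<lambda>i. q i - p i) \<longlonglongrightarrow> 0"
  proof (rule Lim_null_comparison)
    show "\<forall>\<^sub>F i in sequentially. norm (q i - p i) \<le> norm (q i - p i) / norm (p i) * norm (p i)"
      using p0 by simp
    show "(\<lambda>i. norm (q i - p i) / norm (p i) * norm (p i)) \<longlonglongrightarrow> 0"
      using tendsto_mult[OF r tendsto_norm[OF pl]] by simp
  qed
  from tendsto_add[OF this pl] show "q \<longlonglongrightarrow> 0" by simp
  have "(\<lambda>i. q i /\<^sub>R norm (q i) - p i /\<^sub>R norm (p i)) \<longlonglongrightarrow> 0"
  proof (rule Lim_null_comparison)
    show "\<forall>\<^sub>F i in sequentially. norm (q i /\<^sub>R norm (q i) - p i /\<^sub>R norm (p i)) \<le> 2 * (norm (q i - p i) / norm (p i))"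
      by (rule always_eventually, intro allI unit_diff p0)
    show "(\<lambda>i. 2 * (norm (q i - p i) / norm (p i))) \<longlonglongrightarrow> 0"
      using tendsto_mult[OF tendsto_const r, of 2] by simp
  qed
  from tendsto_add[OF this pa] show "(\<lambda>i. q i /\<^sub>R norm (q i)) \<longlonglongrightarrow> a" by simp
qed

lemma ratio_powr:
  fixes p q :: "nat \<Rightarrow> 'a::real_normed_vector"
  assumes p0: "\<And>i. p i \<noteq> 0" and pl: "p \<longlonglongrightarrow> 0" and d: "d > 1" and c: "c \<ge> 0"
    and ev: "eventually (\<lambda>i. norm (q i - p i) \<le> c * norm (p i) powr d) sequentially"
  shows "(\<lambda>i. norm (q i - p i) / norm (p i)) \<longlonglongrightarrow> 0"
proof (rule Lim_null_comparison)
  show "\<forall>\<^sub>F i in sequentially. norm (norm (q i - p i) / norm (p i)) \<le> c * norm (p i) powr (d - 1)"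
    using ev
  proof eventually_elim
    case (elim i)
    have np: "norm (p i) > 0" using p0 by simp
    have "norm (p i) powr (d - 1) = norm (p i) powr d / norm (p i)"
      using np by (simp add: powr_diff)
    then show ?case using elim np by (simp add: divide_right_mono)
  qed
  have "(\<lambda>i. norm (p i) powr (d - 1)) \<longlonglongrightarrow> 0"
    by (rule tendsto_zero_powrI[OF tendsto_norm_zero[OF pl] tendsto_const]) (use d in auto)
  from tendsto_mult[OF tendsto_const this, of c]
  show "(\<lambda>i. c * norm (p i) powr (d - 1)) \<longlonglongrightarrow> 0" by simp
qed

lemma dir_intro:
  fixes q :: "nat \<Rightarrow> 'a::euclidean_space"
  assumes "norm a = 1" "eventually (\<lambda>i. q i \<in> X \<and> q i \<noteq> 0) sequentially"
    "q \<longlonglongrightarrow> 0" "(\<lambda>i. q i /\<^sub>R norm (q i)) \<longlonglongrightarrow> a"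
  shows "a \<in> direction_set X"
proof -
  obtain N where N: "\<And>i. i \<ge> N \<Longrightarrow> q i \<in> X \<and> q i \<noteq> 0"
    using assms(2) unfolding eventually_sequentially by blast
  have "\<forall>i. q (i + N) \<in> X - {0}" using N by auto
  moreover have "(\<lambda>i. q (i + N)) \<longlonglongrightarrow> 0" using LIMSEQ_ignore_initial_segment[OF assms(3)] .
  moreover have "(\<lambda>i. q (i + N) /\<^sub>R norm (q (i + N))) \<longlonglongrightarrow> a"
    using LIMSEQ_ignore_initial_segment[OF assms(4)] .
  ultimately show ?thesis unfolding direction_set_def mem_Collect_eq using assms(1)
    by (intro conjI exI[of _ "\<lambda>i. q (i + N)"]) auto
qed

lemma dir_elim:
  assumes "a \<in> direction_set X"
  obtains x where "\<And>i. x i \<in> X - {0}" "x \<longlonglongrightarrow> 0" "(\<lambda>i. x i /\<^sub>R norm (x i)) \<longlonglongrightarrow> a" "norm a = 1"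
proof -
  have n: "norm a = 1" using assms by (simp add: direction_set_def)
  have "\<exists>x. (\<forall>i. x i \<in> X - {0}) \<and> x \<longlonglongrightarrow> 0 \<and> (\<lambda>i. x i /\<^sub>R norm (x i)) \<longlonglongrightarrow> a"
    using assms by (simp add: direction_set_def)
  then obtain x where x: "\<forall>i. x i \<in> X - {0}" "x \<longlonglongrightarrow> 0" "(\<lambda>i. x i /\<^sub>R norm (x i)) \<longlonglongrightarrow> a"
    by (elim exE conjE)
  show thesis
    by (rule that[of x]) (use x n in simp_all)
qed

lemma part1:
  fixes A B U :: "'a::euclidean_space set" and h :: "'a \<Rightarrow> 'a" and d C :: real
  assumes B: "B \<noteq> {}"
    and U: "open U" "0 \<in> U" and h0: "h 0 = 0"
    and K: "0 < K1" "K1 \<le> K2" "\<forall>x\<in>U. \<forall>y\<in>U. K1 * dist x y \<le> dist (h x) (h y) \<and> dist (h x) (h y) \<le> K2 * dist x y"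
    and d: "d > 1" and C: "C > 0"
    and e: "e > 0" "A \<inter> ball 0 e \<subseteq> sea_tangle d B C"
    and a: "a \<in> direction_set (h ` (A \<inter> U))"
  shows "a \<in> direction_set (h ` (B \<inter> U))"
proof -
  obtain z where z: "\<And>i. z i \<in> h ` (A \<inter> U) - {0}" "z \<longlonglongrightarrow> 0"
    "(\<lambda>i. z i /\<^sub>R norm (z i)) \<longlonglongrightarrow> a" and na: "norm a = 1"
    by (rule dir_elim[OF a], rule that)
  define x where "x i = (SOME x. x \<in> A \<inter> U \<and> h x = z i)" for i
  have x: "x i \<in> A \<inter> U \<and> h (x i) = z i" for i
  proof -
    have "z i \<in> h ` (A \<inter> U)" using z(1)[of i] by simp
    then obtain u where u: "u \<in> A \<inter> U" "z i = h u" by (rule imageE)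
    show ?thesis unfolding x_def by (rule someI2[of _ u]) (use u in simp_all)
  qed
  have x0: "x i \<noteq> 0" for i using x[of i] z(1)[of i] h0 by auto
  have Kx: "K1 * norm (x i) \<le> norm (z i)" for i
  proof -
    have xU: "x i \<in> U" using x[of i] by simp
    have "K1 * dist (x i) 0 \<le> dist (h (x i)) (h 0)" using bspec[OF bspec[OF K(3) xU] U(2)] by simp
    then show ?thesis using x[of i] h0 by simp
  qed
  have xl: "x \<longlonglongrightarrow> 0"
  proof (rule Lim_null_comparison)
    show "\<forall>\<^sub>F i in sequentially. norm (x i) \<le> norm (z i) / K1"
      using Kx K(1) by (simp add: field_simps mult.commute)
    show "(\<lambda>i. norm (z i) / K1) \<longlonglongrightarrow> 0"
      using tendsto_divide[OF tendsto_norm_zero[OF z(2)] tendsto_const, of K1] K(1) by simp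
  qed
  define y where "y i = (SOME y. y \<in> B \<and> dist (x i) y < infdist (x i) B + norm (x i) powr d)" for i
  have y: "y i \<in> B \<and> dist (x i) (y i) < infdist (x i) B + norm (x i) powr d" for i
  proof -
    have "norm (x i) powr d > 0" using x0 by simp
    then have "\<exists>y\<in>B. dist (x i) y < infdist (x i) B + norm (x i) powr d"
      using infdist_witness[OF B] by simp
    then obtain u where u: "u \<in> B" "dist (x i) u < infdist (x i) B + norm (x i) powr d" by (elim bexE)
    show ?thesis unfolding y_def by (rule someI2[of _ u]) (use u in simp_all)
  qed
  obtain N where N: "\<And>i. i \<ge> N \<Longrightarrow> norm (x i) < e"
    using order_tendstoD(2)[OF tendsto_norm_zero[OF xl] e(1)] unfolding eventually_sequentially by blast
  have yx: "norm (y i - x i) \<le> (C + 1) * norm (x i) powr d" if "i \<ge> N" for i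
  proof -
    have "x i \<in> sea_tangle d B C" using e(2) x[of i] N[OF that] by auto
    then have "infdist (x i) B \<le> C * norm (x i) powr d" unfolding sea_tangle_def by simp
    then show ?thesis using y[of i] by (simp add: dist_norm norm_minus_commute algebra_simps)
  qed
  have rxy: "(\<lambda>i. norm (y i - x i) / norm (x i)) \<longlonglongrightarrow> 0"
    by (rule ratio_powr[OF x0 xl d, of "C + 1"]) (use C yx in \<open>auto simp: eventually_sequentially\<close>)
  have yl: "y \<longlonglongrightarrow> 0"
  proof -
    have "(\<lambda>i. y i - x i) \<longlonglongrightarrow> 0"
    proof (rule Lim_null_comparison)
      show "\<forall>\<^sub>F i in sequentially. norm (y i - x i) \<le> norm (y i - x i) / norm (x i) * norm (x i)"
        using x0 by simp
      show "(\<lambda>i. norm (y i - x i) / norm (x i) * norm (x i)) \<longlonglongrightarrow> 0"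
        using tendsto_mult[OF rxy tendsto_norm[OF xl]] by simp
    qed
    from tendsto_add[OF this xl] show ?thesis by simp
  qed
  obtain r where r: "r > 0" "ball 0 r \<subseteq> U" using U openE by blast
  obtain M where M: "\<And>i. i \<ge> M \<Longrightarrow> norm (y i) < r"
    using order_tendstoD(2)[OF tendsto_norm_zero[OF yl] r(1)] unfolding eventually_sequentially by blast
  have yU: "y i \<in> U" if "i \<ge> M" for i using M[OF that] r(2) by auto
  define w where "w i = h (y i)" for i
  have z0: "z i \<noteq> 0" for i using z(1) by auto
  have zl: "(\<lambda>i. norm (w i - z i) / norm (z i)) \<longlonglongrightarrow> 0"
  proof (rule Lim_null_comparison)
    show "\<forall>\<^sub>F i in sequentially. norm (norm (w i - z i) / norm (z i)) \<le> K2 / K1 * (norm (y i - x i) / norm (x i))"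
      unfolding eventually_sequentially
    proof (intro exI allI impI)
      fix i assume i: "i \<ge> M"
      have "norm (w i - z i) \<le> K2 * norm (y i - x i)"
      proof -
        have xU: "x i \<in> U" using x[of i] by simp
        have "dist (h (y i)) (h (x i)) \<le> K2 * dist (y i) (x i)" using bspec[OF bspec[OF K(3) yU[OF i]] xU] by simp
        then show ?thesis using x[of i] by (simp add: w_def dist_norm)
      qed
      moreover have "K1 * norm (x i) \<le> norm (z i)" by (rule Kx)
      moreover have "norm (x i) > 0" using x0 by simp
      ultimately have A1: "norm (w i - z i) \<le> K2 * norm (y i - x i)" and A2: "K1 * norm (x i) \<le> norm (z i)"
        and A3: "norm (x i) > 0" by blast+
      have A4: "K1 * norm (x i) > 0" using A3 K(1) by simp
      have "norm (w i - z i) / norm (z i) \<le> K2 * norm (y i - x i) / norm (z i)"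
        using A1 A2 A4 by (intro divide_right_mono) simp_all
      also have "\<dots> \<le> K2 * norm (y i - x i) / (K1 * norm (x i))"
      proof (rule divide_left_mono)
        show "K1 * norm (x i) \<le> norm (z i)" by (rule A2)
        show "0 \<le> K2 * norm (y i - x i)" using K by simp
        have "norm (z i) > 0" using A2 A4 by linarith
        then show "0 < norm (z i) * (K1 * norm (x i))" using A4 by (rule mult_pos_pos)
      qed
      also have "\<dots> = K2 / K1 * (norm (y i - x i) / norm (x i))" by simp
      finally show "norm (norm (w i - z i) / norm (z i)) \<le> K2 / K1 * (norm (y i - x i) / norm (x i))"
        by simp
    qed
    show "(\<lambda>i. K2 / K1 * (norm (y i - x i) / norm (x i))) \<longlonglongrightarrow> 0"
      using tendsto_mult[OF tendsto_const rxy, of "K2 / K1"] by simp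
  qed
  note dc = dir_close[OF z0 z(2) z(3) zl]
  show ?thesis
  proof (rule dir_intro[OF na _ dc(2) dc(3)])
    show "\<forall>\<^sub>F i in sequentially. w i \<in> h ` (B \<inter> U) \<and> w i \<noteq> 0"
      using dc(1) eventually_ge_at_top[of M]
      by eventually_elim (use y yU w_def in auto)
  qed
qed

theorem lemma4p9:
  fixes A B U :: "'a::euclidean_space set" and h :: "'a \<Rightarrow> 'a" and d C :: real
  assumes "0 \<in> closure A" and "0 \<in> closure B"
    and "bilipschitz_homeo_germ h U"
    and "d > 1" and "C > 0"
    and "\<exists>e>0. A \<inter> ball 0 e \<subseteq> sea_tangle d B C"
  shows "direction_set (h ` (A \<inter> U)) \<subseteq> direction_set (h ` (B \<inter> U)) \<and>
         (\<forall>C'>0. direction_set (sea_tangle d (h ` (A \<inter> U)) C') \<subseteq> direction_set (h ` (B \<inter> U)))"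
proof -
  have B: "B \<noteq> {}" using assms(2) by auto
  have U: "open U" "0 \<in> U" "h 0 = 0" using assms(3) unfolding bilipschitz_homeo_germ_def by auto
  obtain K1 K2 where K: "0 < K1" "K1 \<le> K2" "\<forall>x\<in>U. \<forall>y\<in>U. K1 * dist x y \<le> dist (h x) (h y) \<and> dist (h x) (h y) \<le> K2 * dist x y"
    using assms(3) unfolding bilipschitz_homeo_germ_def by blast
  obtain e where e: "e > 0" "A \<inter> ball 0 e \<subseteq> sea_tangle d B C" using assms(6) by blast
  have P1: "direction_set (h ` (A \<inter> U)) \<subseteq> direction_set (h ` (B \<inter> U))"
    by (intro subsetI part1[OF B U K assms(4,5) e])
  have AU: "h ` (A \<inter> U) \<noteq> {}"
  proof -
    obtain r where "r > 0" "ball 0 r \<subseteq> U" using U openE by blast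
    moreover obtain a where "a \<in> A" "dist a 0 < r" using assms(1) \<open>r > 0\<close> closure_approachable by blast
    ultimately show ?thesis by (auto simp: dist_commute)
  qed
  have P2: "direction_set (sea_tangle d (h ` (A \<inter> U)) C') \<subseteq> direction_set (h ` (A \<inter> U))" if C': "C' > 0" for C'
  proof
    fix a assume a: "a \<in> direction_set (sea_tangle d (h ` (A \<inter> U)) C')"
    obtain v where v: "\<And>i. v i \<in> sea_tangle d (h ` (A \<inter> U)) C' - {0}" "v \<longlonglongrightarrow> 0"
      "(\<lambda>i. v i /\<^sub>R norm (v i)) \<longlonglongrightarrow> a" and na: "norm a = 1"
      by (rule dir_elim[OF a], rule that)
    have v0: "v i \<noteq> 0" for i using v(1) by auto
    define z where "z i = (SOME y. y \<in> h ` (A \<inter> U) \<and> dist (v i) y < infdist (v i) (h ` (A \<inter> U)) + norm (v i) powr d)" for i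
    have z: "z i \<in> h ` (A \<inter> U) \<and> dist (v i) (z i) < infdist (v i) (h ` (A \<inter> U)) + norm (v i) powr d" for i
    proof -
      have "norm (v i) powr d > 0" using v0 by simp
      then have "\<exists>y\<in>h ` (A \<inter> U). dist (v i) y < infdist (v i) (h ` (A \<inter> U)) + norm (v i) powr d"
        using infdist_witness[OF AU] by simp
      then obtain u where u: "u \<in> h ` (A \<inter> U)" "dist (v i) u < infdist (v i) (h ` (A \<inter> U)) + norm (v i) powr d" by (elim bexE)
      show ?thesis unfolding z_def by (rule someI2[of _ u]) (use u in simp_all)
    qed
    have zv: "norm (z i - v i) \<le> (C' + 1) * norm (v i) powr d" for i
    proof -
      have "infdist (v i) (h ` (A \<inter> U)) \<le> C' * norm (v i) powr d"
        using v(1)[of i] unfolding sea_tangle_def by simp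
      then show ?thesis using z[of i] by (simp add: dist_norm norm_minus_commute algebra_simps)
    qed
    have r: "(\<lambda>i. norm (z i - v i) / norm (v i)) \<longlonglongrightarrow> 0"
      by (rule ratio_powr[OF v0 v(2) assms(4), of "C' + 1"]) (use C' zv in auto)
    note dc = dir_close[OF v0 v(2) v(3) r]
    show "a \<in> direction_set (h ` (A \<inter> U))"
    proof (rule dir_intro[OF na _ dc(2) dc(3)])
      show "\<forall>\<^sub>F i in sequentially. z i \<in> h ` (A \<inter> U) \<and> z i \<noteq> 0"
        using dc(1) by eventually_elim (use z in auto)
    qed
  qed
  show ?thesis using P1 P2 by blast
qed

end
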